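(* Let $a,c,p\in\mathbb{C}$ with $-c\notin\mathbb{N}\cup\{0\}$. Define sequences $(u_n)_{n\ge0}$ and $(v_n)_{n\ge0}$ by $u_0=1$, $u_1=\frac{a}{c}+p$, $v_0=1$, $v_1=\frac{a}{c}-p$ and, for all integers $n\ge1$, \[ u_{n+1}=\frac{a+p(c+2n)+n}{(n+1)(c+n)}u_n-\frac{p(p+1)}{(n+1)(c+n)}u_{n-1}, \] \[ v_{n+1}=\frac{a-p(c+2n)+n}{(n+1)(c+n)}v_n-\frac{(p-1)p}{(n+1)(c+n)}v_{n-1}. \] Then \[ \sinh(pz)\,M(a,c;z)=\sum_{n=0}^\infty\frac{u_n-v_n}{2}z^n,\qquad z\in\mathbb{C}. \]
   Context: For $a\in\mathbb{C}$, $(a)_n=a(a+1)\cdots(a+n-1)$ denotes the Pochhammer symbol, with $(a)_0=1$. For $a,c\in\mathbb{C}$ with $-c\notin\mathbb{N}\cup\{0\}$, the confluent hypergeometric (Kummer) function is $M(a,c;z)=\sum_{n=0}^\infty \frac{(a)_n}{(c)_n\,n!}z^n$, $z\in\mathbb{C}$. *)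

theory Defs
  imports "HOL-Analysis.Analysis"
begin

definition kummerM :: "complex \<Rightarrow> complex \<Rightarrow> complex \<Rightarrow> complex" where
  "kummerM a c z = (\<Sum>n. pochhammer a n / (pochhammer c n * of_nat (fact n)) * z ^ n)"

fun useq :: "complex \<Rightarrow> complex \<Rightarrow> complex \<Rightarrow> nat \<Rightarrow> complex" where
  "useq a c p 0 = 1"
| "useq a c p (Suc 0) = a / c + p"
| "useq a c p (Suc (Suc m)) =
     (let n = of_nat (Suc m) :: complex in
       (a + p * (c + 2 * n) + n) / ((n + 1) * (c + n)) * useq a c p (Suc m)
       - p * (p + 1) / ((n + 1) * (c + n)) * useq a c p m)"

fun vseq :: "complex \<Rightarrow> complex \<Rightarrow> complex \<Rightarrow> nat \<Rightarrow> complex" where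
  "vseq a c p 0 = 1"
| "vseq a c p (Suc 0) = a / c - p"
| "vseq a c p (Suc (Suc m)) =
     (let n = of_nat (Suc m) :: complex in
       (a - p * (c + 2 * n) + n) / ((n + 1) * (c + n)) * vseq a c p (Suc m)
       - (p - 1) * p / ((n + 1) * (c + n)) * vseq a c p m)"

end

theory Submission
  imports Defs "HOL-Computational_Algebra.Formal_Power_Series"
begin
definition mc :: "complex \<Rightarrow> complex \<Rightarrow> nat \<Rightarrow> complex" where
  "mc a c k = pochhammer a k / (pochhammer c k * of_nat (fact k))"

lemma mc_Suc:
  assumes h1: "c + of_nat k \<noteq> 0" and h2: "pochhammer c k \<noteq> (0::complex)"
  shows "mc a c (Suc k) = (a + of_nat k) / ((of_nat k + 1) * (c + of_nat k)) * mc a c k"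
proof -
  have h3: "(of_nat (fact k) :: complex) \<noteq> 0" by simp
  have h4: "(of_nat k + 1 :: complex) \<noteq> 0" by (metis of_nat_Suc of_nat_eq_0_iff nat.distinct(1) add.commute)
  have e1: "pochhammer a (Suc k) = pochhammer a k * (a + of_nat k)" by (simp add: pochhammer_rec')
  have e2: "pochhammer c (Suc k) = pochhammer c k * (c + of_nat k)" by (simp add: pochhammer_rec')
  have e3: "(of_nat (fact (Suc k)) :: complex) = (of_nat k + 1) * of_nat (fact k)" by (simp add: algebra_simps)
  show ?thesis unfolding mc_def e1 e2 e3 using h1 h2 h3 h4 by (simp add: field_simps)
qed

lemma mc_rec:
  assumes h1: "c + of_nat k \<noteq> 0" and h2: "pochhammer c k \<noteq> (0::complex)"
  shows "(of_nat k + 1) * (c + of_nat k) * mc a c (Suc k) = (a + of_nat k) * mc a c k"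
proof -
  have h4: "(of_nat k + 1 :: complex) \<noteq> 0" by (metis of_nat_Suc of_nat_eq_0_iff nat.distinct(1) add.commute)
  have nz: "(of_nat k + 1) * (c + of_nat k) \<noteq> 0" using h1 h4 by simp
  show ?thesis unfolding mc_Suc[OF h1 h2] using nz by simp
qed

definition FF :: "complex \<Rightarrow> complex \<Rightarrow> complex fps" where
  "FF a c = Abs_fps (mc a c)"

lemma FF_ode:
  assumes "\<And>k. c + of_nat k \<noteq> 0" "\<And>k. pochhammer c k \<noteq> (0::complex)"
  shows "fps_X * fps_deriv (fps_deriv (FF a c)) + fps_const c * fps_deriv (FF a c)
         - fps_X * fps_deriv (FF a c) - fps_const a * FF a c = 0"
proof (rule fps_ext)
  fix n
  show "fps_nth (fps_X * fps_deriv (fps_deriv (FF a c)) + fps_const c * fps_deriv (FF a c)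
         - fps_X * fps_deriv (FF a c) - fps_const a * FF a c) n = fps_nth 0 n"
  proof (cases n)
    case 0
    then show ?thesis using mc_rec[OF assms, of 0 a] by (simp add: FF_def)
  next
    case (Suc m)
    have "(of_nat (Suc m) + 1) * (c + of_nat (Suc m)) * mc a c (Suc (Suc m)) = (a + of_nat (Suc m)) * mc a c (Suc m)"
      by (rule mc_rec[OF assms])
    then show ?thesis using Suc by (simp add: FF_def algebra_simps)
  qed
qed

definition GG :: "complex \<Rightarrow> complex \<Rightarrow> complex \<Rightarrow> complex fps" where
  "GG a c p = fps_exp p * FF a c"

lemma GG_ode:
  assumes "\<And>k. c + of_nat k \<noteq> 0" "\<And>k. pochhammer c k \<noteq> (0::complex)"
  shows "fps_X * fps_deriv (fps_deriv (GG a c p)) + fps_const c * fps_deriv (GG a c p)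
         - fps_X * fps_deriv (GG a c p) - fps_const (2*p) * (fps_X * fps_deriv (GG a c p))
         + fps_X * (fps_const (p*p+p) * GG a c p) - fps_const (p*c+a) * GG a c p = 0"
proof -
  define F where "F = FF a c"
  define E where "E = fps_exp p"
  define P where "P = fps_const p"
  define Cc where "Cc = fps_const c"
  define A where "A = fps_const a"
  have dE: "fps_deriv E = P * E" by (simp add: E_def P_def)
  have G: "GG a c p = E * F" by (simp add: GG_def E_def F_def)
  have k1: "fps_const (2*p) = 2*P" by (simp add: P_def numeral_fps_const)
  have k2: "fps_const (p*p+p) = P*P+P" by (simp add: P_def)
  have k3: "fps_const (p*c+a) = P*Cc+A" by (simp add: P_def Cc_def A_def)
  have L: "fps_X * fps_deriv (fps_deriv F) + Cc * fps_deriv F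
         - fps_X * fps_deriv F - A * F = 0" unfolding F_def Cc_def A_def by (rule FF_ode[OF assms])
  have "fps_X * fps_deriv (fps_deriv (GG a c p)) + fps_const c * fps_deriv (GG a c p)
         - fps_X * fps_deriv (GG a c p) - fps_const (2*p) * (fps_X * fps_deriv (GG a c p))
         + fps_X * (fps_const (p*p+p) * GG a c p) - fps_const (p*c+a) * GG a c p
       = E * (fps_X * fps_deriv (fps_deriv F) + Cc * fps_deriv F
         - fps_X * fps_deriv F - A * F)"
    unfolding G k1 k2 k3 Cc_def[symmetric] fps_deriv_mult dE
    by (simp add: algebra_simps mult_2 dE) (simp add: P_def)
  then show ?thesis using L by simp
qed

lemma GG_coef:
  assumes "\<And>k. c + of_nat k \<noteq> 0" "\<And>k. pochhammer c k \<noteq> (0::complex)"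
  shows "c * fps_nth (GG a c p) 1 = (p*c+a) * fps_nth (GG a c p) 0"
    and "(of_nat (Suc m) + 1) * (c + of_nat (Suc m)) * fps_nth (GG a c p) (Suc (Suc m)) =
         (a + p * (c + 2 * of_nat (Suc m)) + of_nat (Suc m)) * fps_nth (GG a c p) (Suc m)
         - p * (p + 1) * fps_nth (GG a c p) m"
proof -
  have L: "fps_X * fps_deriv (fps_deriv (GG a c p)) + fps_const c * fps_deriv (GG a c p)
         - fps_X * fps_deriv (GG a c p) - fps_const (2*p) * (fps_X * fps_deriv (GG a c p))
         + fps_X * (fps_const (p*p+p) * GG a c p) - fps_const (p*c+a) * GG a c p = 0"
    by (rule GG_ode[OF assms])
  have "fps_nth (fps_X * fps_deriv (fps_deriv (GG a c p)) + fps_const c * fps_deriv (GG a c p)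
         - fps_X * fps_deriv (GG a c p) - fps_const (2*p) * (fps_X * fps_deriv (GG a c p))
         + fps_X * (fps_const (p*p+p) * GG a c p) - fps_const (p*c+a) * GG a c p) 0 = 0"
    unfolding L by simp
  then show "c * fps_nth (GG a c p) 1 = (p*c+a) * fps_nth (GG a c p) 0"
    by (simp add: algebra_simps)
  have "fps_nth (fps_X * fps_deriv (fps_deriv (GG a c p)) + fps_const c * fps_deriv (GG a c p)
         - fps_X * fps_deriv (GG a c p) - fps_const (2*p) * (fps_X * fps_deriv (GG a c p))
         + fps_X * (fps_const (p*p+p) * GG a c p) - fps_const (p*c+a) * GG a c p) (Suc m) = 0"
    unfolding L by simp
  then show "(of_nat (Suc m) + 1) * (c + of_nat (Suc m)) * fps_nth (GG a c p) (Suc (Suc m)) =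
         (a + p * (c + 2 * of_nat (Suc m)) + of_nat (Suc m)) * fps_nth (GG a c p) (Suc m)
         - p * (p + 1) * fps_nth (GG a c p) m"
    by (simp add: algebra_simps)
qed

lemma GG_0: "fps_nth (GG a c p) 0 = 1"
  by (simp add: GG_def FF_def mc_def)

lemma aux: "(D::complex) \<noteq> 0 \<Longrightarrow> D*z = A*x - B*y \<Longrightarrow> A/D*x - B/D*y = z"
  by (simp add: field_simps)

lemma useq_GG:
  assumes "\<And>k. c + of_nat k \<noteq> 0" "\<And>k. pochhammer c k \<noteq> (0::complex)"
  shows "useq a c p n = fps_nth (GG a c p) n"
proof (induction n rule: less_induct)
  case (less n)
  show ?case
  proof (cases n)
    case 0
    then show ?thesis by (simp add: GG_0)
  next
    case (Suc n')
    show ?thesis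
    proof (cases n')
      case 0
      have "c \<noteq> 0" using assms(1)[of 0] by simp
      then show ?thesis using GG_coef(1)[OF assms, of a p] Suc 0 by (simp add: GG_0 field_simps)
    next
      case (Suc m)
      have IH1: "useq a c p (Suc m) = fps_nth (GG a c p) (Suc m)" using less \<open>n = Suc n'\<close> Suc by simp
      have IH0: "useq a c p m = fps_nth (GG a c p) m" using less \<open>n = Suc n'\<close> Suc by simp
      have nz1: "(of_nat (Suc m) + 1 :: complex) \<noteq> 0"
      proof -
        have "(of_nat (Suc m) + 1 :: complex) = of_nat (Suc (Suc m))" by simp
        also have "\<dots> \<noteq> 0" by (rule of_nat_neq_0)
        finally show ?thesis .
      qed
      have nz: "(of_nat (Suc m) + 1) * (c + of_nat (Suc m)) \<noteq> (0::complex)"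
        using nz1 assms(1)[of "Suc m"] by (simp only: mult_eq_0_iff de_Morgan_disj) blast
      have R: "(of_nat (Suc m) + 1) * (c + of_nat (Suc m)) * fps_nth (GG a c p) (Suc (Suc m)) =
             (a + p * (c + 2 * of_nat (Suc m)) + of_nat (Suc m)) * fps_nth (GG a c p) (Suc m)
             - p * (p + 1) * fps_nth (GG a c p) m" by (rule GG_coef(2)[OF assms])
      have "useq a c p (Suc (Suc m)) = (a + p * (c + 2 * of_nat (Suc m)) + of_nat (Suc m)) / ((of_nat (Suc m) + 1) * (c + of_nat (Suc m))) * useq a c p (Suc m)
           - p * (p + 1) / ((of_nat (Suc m) + 1) * (c + of_nat (Suc m))) * useq a c p m"
        by (simp only: useq.simps(3) Let_def)
      also have "\<dots> = (a + p * (c + 2 * of_nat (Suc m)) + of_nat (Suc m)) / ((of_nat (Suc m) + 1) * (c + of_nat (Suc m))) * fps_nth (GG a c p) (Suc m)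
           - p * (p + 1) / ((of_nat (Suc m) + 1) * (c + of_nat (Suc m))) * fps_nth (GG a c p) m"
        by (simp only: IH0 IH1)
      also have "\<dots> = fps_nth (GG a c p) (Suc (Suc m))"
        by (rule aux[OF nz R])
      finally show ?thesis using \<open>n = Suc n'\<close> Suc by simp
    qed
  qed
qed

lemma vseq_useq_aux: "vseq a c p n = useq a c (-p) n \<and> vseq a c p (Suc n) = useq a c (-p) (Suc n)"
proof (induction n)
  case 0
  then show ?case by simp
next
  case (Suc n)
  have e1: "\<And>N. a - p * (c + 2 * N) + N = a + (-p) * (c + 2 * N) + N" by simp
  have e2: "(p - 1) * p = (-p) * (-p + 1)" by (simp add: algebra_simps)
  have "vseq a c p (Suc (Suc n)) = useq a c (-p) (Suc (Suc n))"
    by (simp only: vseq.simps(3) useq.simps(3) Let_def e1 e2 Suc.IH)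
  then show ?case using Suc.IH by simp
qed

lemma vseq_useq: "vseq a c p n = useq a c (-p) n"
  using vseq_useq_aux by blast


lemma aux2: "(x+1::complex) \<noteq> 0 \<Longrightarrow> (y::complex) \<noteq> 0 \<Longrightarrow> (a + x)/((x+1)*y)*z = z*(1+(a-1)/(x+1))/y"
proof -
  assume h: "(x+1::complex) \<noteq> 0" "y \<noteq> 0"
  have "1+(a-1)/(x+1) = (a+x)/(x+1)" using h by (simp add: divide_simps)
  then show ?thesis by simp
qed
lemma aux3: "(p*z::complex)^i /\<^sub>R fact i = p^i * z^i / fact i"
  unfolding scaleR_conv_of_real of_real_inverse of_real_fact
  by (simp add: power_mult_distrib divide_inverse_commute)
lemma aux4: "(w::complex) * v = u \<Longrightarrow> (q * w / f) * (m * v) = q/f*m*u"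
  by (metis (no_types, lifting) mult.assoc mult.left_commute times_divide_eq_left)
lemma aux6: "(x /\<^sub>R 2 :: complex) = x / 2"
  by (simp add: complex_eq_iff)
lemma aux7: "(A - B)/2 * (M::complex) = (A*M - B*M)/2"
  by (simp add: left_diff_distrib)
lemma aux5: "sinh (p*z::complex) * M = (exp (p*z) * M - exp ((-p)*z) * M) / 2"
  unfolding sinh_def aux6 aux7 by simp

lemma mc_summable:
  assumes "\<And>k. c + of_nat k \<noteq> 0" "\<And>k. pochhammer c k \<noteq> (0::complex)"
  shows "summable (\<lambda>n. norm (mc a c n * z ^ n))"
proof -
  define r where "r n = (a + of_nat n) / ((of_nat n + 1) * (c + of_nat n)) * z" for n
  have r_eq: "r n = (z * (1 + (a - 1) / of_nat (Suc n))) / (c + of_nat n)" for n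
  proof -
    have h: "(of_nat n + 1 :: complex) \<noteq> 0"
      by (metis of_nat_Suc of_nat_eq_0_iff nat.distinct(1) add.commute)
    have h2: "(of_nat (Suc n) :: complex) = of_nat n + 1" by simp
    show ?thesis unfolding r_def h2 by (rule aux2[OF h assms(1)])
  qed
  have "(\<lambda>n. z * (1 + (a - 1) / of_nat (Suc n))) \<longlonglongrightarrow> z * (1 + 0)"
    by (rule tendsto_mult[OF tendsto_const tendsto_add[OF tendsto_const LIMSEQ_Suc[OF lim_const_over_n]]])
  then have "(\<lambda>n. (z * (1 + (a - 1) / of_nat (Suc n))) / (c + of_nat n)) \<longlonglongrightarrow> 0"
    by (rule tendsto_divide_0) (rule tendsto_add_filterlim_at_infinity[OF tendsto_const tendsto_of_nat])
  then have "r \<longlonglongrightarrow> 0" unfolding r_eq[abs_def] .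
  then have "eventually (\<lambda>n. dist (r n) 0 < 1/2) sequentially"
    by (rule tendstoD) simp
  then obtain N where N: "\<And>n. n \<ge> N \<Longrightarrow> norm (r n) < 1/2"
    by (auto simp: eventually_sequentially)
  show ?thesis
  proof (rule summable_ratio_test[of "1/2" N])
    fix n assume "n \<ge> N"
    have "mc a c (Suc n) * z ^ Suc n = r n * (mc a c n * z ^ n)"
      unfolding mc_Suc[OF assms] r_def by (simp add: algebra_simps)
    then have "norm (mc a c (Suc n) * z ^ Suc n) = norm (r n) * norm (mc a c n * z ^ n)"
      by (simp only: norm_mult)
    then have "norm (norm (mc a c (Suc n) * z ^ Suc n)) = norm (r n) * norm (norm (mc a c n * z ^ n))"
      by simp
    also have "\<dots> \<le> 1/2 * norm (norm (mc a c n * z ^ n))"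
      using N[OF \<open>n \<ge> N\<close>] by (intro mult_right_mono) auto
    finally show "norm (norm (mc a c (Suc n) * z ^ Suc n)) \<le> 1/2 * norm (norm (mc a c n * z ^ n))" .
  qed simp
qed

lemma GG_sums:
  assumes "\<And>k. c + of_nat k \<noteq> 0" "\<And>k. pochhammer c k \<noteq> (0::complex)"
  shows "(\<lambda>n. fps_nth (GG a c p) n * z ^ n) sums (exp (p * z) * kummerM a c z)"
proof -
  have K: "kummerM a c z = (\<Sum>n. mc a c n * z ^ n)" unfolding kummerM_def mc_def ..
  have C: "(\<lambda>k. \<Sum>i\<le>k. ((p*z) ^ i /\<^sub>R fact i) * (mc a c (k - i) * z ^ (k - i))) sums
      ((\<Sum>k. (p*z) ^ k /\<^sub>R fact k) * (\<Sum>k. mc a c k * z ^ k))"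
    by (rule Cauchy_product_sums[OF summable_norm_exp mc_summable[OF assms]])
  have E: "(\<Sum>i\<le>k. ((p*z) ^ i /\<^sub>R fact i) * (mc a c (k - i) * z ^ (k - i))) = fps_nth (GG a c p) k * z ^ k" for k
  proof -
    have "(\<Sum>i\<le>k. ((p*z) ^ i /\<^sub>R fact i) * (mc a c (k - i) * z ^ (k - i)))
        = (\<Sum>i\<le>k. (p ^ i / fact i * mc a c (k - i)) * z ^ k)"
    proof (rule sum.cong[OF refl])
      fix i assume "i \<in> {..k}"
      then have "z ^ i * z ^ (k - i) = z ^ k" by (simp add: power_add[symmetric])
      then show "((p*z) ^ i /\<^sub>R fact i) * (mc a c (k - i) * z ^ (k - i)) = (p ^ i / fact i * mc a c (k - i)) * z ^ k"
        unfolding aux3 by (rule aux4)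
    qed
    also have "\<dots> = fps_nth (GG a c p) k * z ^ k"
      by (simp add: GG_def FF_def fps_mult_nth atLeast0AtMost sum_distrib_right)
    finally show ?thesis .
  qed
  have X: "exp (p*z) = (\<Sum>k. (p*z) ^ k /\<^sub>R fact k)" by (simp only: exp_def)
  have F: "(\<lambda>k. \<Sum>i\<le>k. ((p*z) ^ i /\<^sub>R fact i) * (mc a c (k - i) * z ^ (k - i))) = (\<lambda>k. fps_nth (GG a c p) k * z ^ k)"
    by (rule ext, rule E)
  have C': "(\<lambda>k. fps_nth (GG a c p) k * z ^ k) sums
      ((\<Sum>k. (p*z) ^ k /\<^sub>R fact k) * (\<Sum>k. mc a c k * z ^ k))"
    using C unfolding F .
  show ?thesis unfolding X K by (rule C')
qed

theorem theorem2p2: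
  fixes a c p z :: complex
  assumes "\<forall>k::nat. c \<noteq> - of_nat k"
  shows "(\<lambda>n. (useq a c p n - vseq a c p n) / 2 * z ^ n) sums (sinh (p * z) * kummerM a c z)"
proof -
  have h1: "c + of_nat k \<noteq> 0" for k
  proof
    assume "c + of_nat k = 0"
    then have "c = - of_nat k" by (simp add: eq_neg_iff_add_eq_0)
    with assms show False by blast
  qed
  have h2: "\<And>k. pochhammer c k \<noteq> (0::complex)" using assms by (auto simp: pochhammer_eq_0_iff)
  have S: "(\<lambda>n. (fps_nth (GG a c p) n * z ^ n - fps_nth (GG a c (-p)) n * z ^ n) / 2) sums
      ((exp (p * z) * kummerM a c z - exp ((-p) * z) * kummerM a c z) / 2)"
    by (intro sums_divide sums_diff GG_sums[OF h1 h2])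
  have eq1: "(useq a c p n - vseq a c p n) / 2 * z ^ n = (fps_nth (GG a c p) n * z ^ n - fps_nth (GG a c (-p)) n * z ^ n) / 2" for n
    unfolding vseq_useq useq_GG[OF h1 h2] by (simp add: algebra_simps)
  have eq2: "sinh (p * z) * kummerM a c z = (exp (p * z) * kummerM a c z - exp ((-p) * z) * kummerM a c z) / 2"
    by (rule aux5)
  show ?thesis unfolding eq1 eq2 by (rule S)
qed

end
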